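(* Let $d_1,d_2,b_1,b_2$ be integers with $2\leq b_i\leq d_i/2$ for $i=1,2$. For $i=1,2$ let $T_i\in S^{d_i}\mathbb{C}^2$ be a binary form with cactus rank $c_{d_i}(T_i)=b_i$ and $[T_i]\in\langle\nu_{d_i}(Z[b_i])\rangle$, and let $T=T_1\otimes T_2$. Then $R_{d_1,d_2}(T)\leq d_1b_2+d_2b_1+b_1b_2-1$.
   Context: Identify $S^d\mathbb{C}^2$ with binary forms of degree $d$ in a basis $\{x,y\}$, with dual coordinates $\partial_x,\partial_y$. For $b\geq1$, $Z[b]\subseteq\mathbb{P}^1$ is the zero-dimensional scheme of degree $b$ supported at $[x]$, with ideal $(\partial_y^b)$. $\nu_d:\mathbb{P}^1\to\mathbb{P}(S^d\mathbb{C}^2)$, $[v]\mapsto[v^d]$, is the Veronese embedding; $\langle Y\rangle$ denotes linear span of a subscheme. The cactus rank $c_d(f)$ is the minimal degree of a zero-dimensional scheme $A\subseteq\mathbb{P}^1$ with $[f]\in\langle\nu_d(A)\rangle$. The partially symmetric rank $R_{d_1,d_2}(T)$ is the minimal $r$ with $T=\sum_{i=1}^r v_{i,1}^{\otimes d_1}\otimes v_{i,2}^{\otimes d_2}$, $v_{i,j}\in\mathbb{C}^2$. *)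

theory Defs
  imports Complex_Main
begin

text \<open>A binary form f of degree d in S^d C^2 is represented by its coefficient function
f :: nat => complex, where f i is the coefficient of x^(d-i) y^i (only i <= d matters).
A form g of degree b in the dual variables is represented likewise: g k is the
coefficient of dx^(b-k) dy^k.  A zero-dimensional subscheme A of P^1 of degree b
is Proj of C[dx,dy]/(g) for a nonzero dual form g of degree b (determined up to scalar);
its homogeneous ideal is (g).\<close>

definition form_nonzero :: "nat \<Rightarrow> (nat \<Rightarrow> complex) \<Rightarrow> bool" where
  "form_nonzero b g \<longleftrightarrow> (\<exists>k\<le>b. g k \<noteq> 0)"

definition dual_mult :: "nat \<Rightarrow> (nat \<Rightarrow> complex) \<Rightarrow> nat \<Rightarrow> (nat \<Rightarrow> complex) \<Rightarrow> nat \<Rightarrow> complex" where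
  "dual_mult b g e h k = (\<Sum>j\<in>{j. j \<le> b \<and> j \<le> k \<and> k - j \<le> e}. g j * h (k - j))"

text \<open>Apolarity pairing of a dual form u of degree d with a form f of degree d:
dx^(d-k) dy^k applied to x^(d-i) y^i equals (d-k)! k! if i = k and 0 otherwise.\<close>
definition apolar_pair :: "nat \<Rightarrow> (nat \<Rightarrow> complex) \<Rightarrow> (nat \<Rightarrow> complex) \<Rightarrow> complex" where
  "apolar_pair d u f = (\<Sum>k\<le>d. u k * f k * of_nat (fact (d - k) * fact k))"

text \<open>[f] lies in the linear span of nu_d(A), where A is the scheme with ideal (g), g of
degree b: the linear forms on S^d vanishing on nu_d(A) are exactly I(A)_d = g * (dual forms
of degree d - b), and the span is their common zero locus.\<close>
definition in_span_scheme :: "nat \<Rightarrow> nat \<Rightarrow> (nat \<Rightarrow> complex) \<Rightarrow> (nat \<Rightarrow> complex) \<Rightarrow> bool" where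
  "in_span_scheme d b g f \<longleftrightarrow>
     (b \<le> d \<longrightarrow> (\<forall>h. apolar_pair d (dual_mult b g (d - b) h) f = 0))"

definition Zgen :: "nat \<Rightarrow> nat \<Rightarrow> complex" where
  "Zgen b k = (if k = b then 1 else 0)"

definition cactus_rank :: "nat \<Rightarrow> (nat \<Rightarrow> complex) \<Rightarrow> nat" where
  "cactus_rank d f = (LEAST b. \<exists>g. form_nonzero b g \<and> in_span_scheme d b g f)"

text \<open>A partially symmetric tensor in S^d1 C^2 (x) S^d2 C^2 as a bihomogeneous form:
T i j is the coefficient of x1^(d1-i) y1^i x2^(d2-j) y2^j.  The tensor
v1^(x)d1 (x) v2^(x)d2 with v = (p,q) corresponds to (p x1 + q y1)^d1 (p' x2 + q' y2)^d2.\<close>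
definition pow_coeff :: "nat \<Rightarrow> complex \<times> complex \<Rightarrow> nat \<Rightarrow> complex" where
  "pow_coeff d v i = of_nat (d choose i) * fst v ^ (d - i) * snd v ^ i"

definition tensor_prod :: "(nat \<Rightarrow> complex) \<Rightarrow> (nat \<Rightarrow> complex) \<Rightarrow> nat \<Rightarrow> nat \<Rightarrow> complex" where
  "tensor_prod f1 f2 i j = f1 i * f2 j"

definition ps_rank :: "nat \<Rightarrow> nat \<Rightarrow> (nat \<Rightarrow> nat \<Rightarrow> complex) \<Rightarrow> nat" where
  "ps_rank d1 d2 T = (LEAST r. \<exists>v1 v2 :: nat \<Rightarrow> complex \<times> complex.
      \<forall>i\<le>d1. \<forall>j\<le>d2. T i j = (\<Sum>l<r. pow_coeff d1 (v1 l) i * pow_coeff d2 (v2 l) j))"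

end

theory Submission
  imports Defs
begin

lemma sep:
  fixes p1 p2 N s t g a b i j d1 d2 :: nat
  assumes bez: "p2 * t = p1 * s + 1" and p1: "p1 > 0" and p2: "p2 > 0"
    and N: "N = p2*d1 + p1*d2 + 1" and a: "a < g*p1" and b: "b < g*p2"
    and i: "i \<le> d1" and j: "j \<le> d2" and ad: "a \<le> d1" and bd: "b \<le> d2"
    and dv: "int (N*g) dvd (int ((p2+N*s)*i + (p1+N*t)*j) - int ((p2+N*s)*a + (p1+N*t)*b))"
  shows "i = a \<and> j = b"
proof -
  define x where "x = int i - int a"
  define y where "y = int j - int b"
  define D where "D = int p2 * x + int p1 * y"
  have Deq: "int ((p2+N*s)*i + (p1+N*t)*j) - int ((p2+N*s)*a + (p1+N*t)*b) = D + int N * (int s * x + int t * y)"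
    unfolding D_def x_def y_def by (simp add: algebra_simps)
  have "int N dvd D + int N * (int s * x + int t * y)"
    using dv Deq by (metis dvd_mult_left of_nat_mult)
  hence "int N dvd D" by (simp add: dvd_add_left_iff)
  then obtain k0 where k0: "D = int N * k0" by (auto simp: dvd_def)
  have up: "D < int N"
  proof -
    have "int p2 * x \<le> int p2 * int d1" unfolding x_def using i by (intro mult_left_mono) auto
    moreover have "int p1 * y \<le> int p1 * int d2" unfolding y_def using j by (intro mult_left_mono) auto
    ultimately show ?thesis unfolding D_def N by simp
  qed
  have lo: "D > - int N"
  proof -
    have "x \<ge> - int d1" unfolding x_def using ad by simp
    hence "int p2 * x \<ge> int p2 * (- int d1)" by (intro mult_left_mono) auto
    moreover have "y \<ge> - int d2" unfolding y_def using bd by simp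
    hence "int p1 * y \<ge> int p1 * (- int d2)" by (intro mult_left_mono) auto
    ultimately show ?thesis unfolding D_def N by simp
  qed
  have "k0 = 0"
  proof (rule ccontr)
    assume "k0 \<noteq> 0"
    hence "k0 \<ge> 1 \<or> k0 \<le> -1" by linarith
    moreover have "int N > 0" using N by linarith
    ultimately show False using up lo k0
      by (smt (verit) mult_le_cancel_left1 mult_minus_right mult_le_cancel_left2)
  qed
  hence D0: "int p2 * x = - (int p1 * y)" using k0 D_def by simp
  have cop: "coprime (int p1) (int p2)"
  proof -
    have "int p2 * int t - int p1 * int s = 1" using bez by (metis add_diff_cancel_left' add.commute of_nat_add of_nat_mult of_nat_1)
    show ?thesis unfolding coprime_def
    proof (intro allI impI)
      fix c assume "c dvd int p1" "c dvd int p2"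
      hence "c dvd int p2 * int t - int p1 * int s" by (simp add: dvd_diff)
      thus "is_unit c" using \<open>int p2 * int t - int p1 * int s = 1\<close> by simp
    qed
  qed
  have "int p1 dvd int p2 * x" using D0 by (metis dvd_minus_iff dvd_triv_left)
  hence "int p1 dvd x" using cop by (simp add: coprime_dvd_mult_right_iff)
  then obtain k where xk: "x = int p1 * k" by (auto simp: dvd_def)
  have "int p1 * y = int p1 * (- (int p2 * k))" using D0 xk by (simp add: algebra_simps)
  hence yk: "y = - (int p2 * k)" using p1 by (metis mult_cancel_left of_nat_0_less_iff less_irrefl)
  have bez': "int p2 * int t = int p1 * int s + 1" using bez by (metis of_nat_add of_nat_mult of_nat_1)
  have "int s * x + int t * y = - k"
  proof -
    have "int s * x + int t * y = k * (int p1 * int s - int p2 * int t)" using xk yk by (simp add: algebra_simps)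
    also have "\<dots> = - k" using bez' by simp
    finally show ?thesis .
  qed
  hence "int N * int g dvd int N * (- k)" using dv Deq k0 \<open>k0 = 0\<close> by simp
  moreover have "int N \<noteq> 0" using N by linarith
  ultimately have "int g dvd - k" by (simp add: dvd_mult_cancel_left)
  hence gk: "int g dvd k" by simp
  have "k = 0"
  proof (rule ccontr)
    assume "k \<noteq> 0"
    hence "k > 0 \<or> k < 0" by linarith
    thus False
    proof
      assume "k > 0"
      hence "k \<ge> int g" using gk by (simp add: zdvd_imp_le)
      hence "int p2 * k \<ge> int p2 * int g" using p2 by simp
      moreover have "int b < int g * int p2" using b by (metis of_nat_less_iff of_nat_mult)
      ultimately show False using yk y_def by (simp add: mult.commute)
    next
      assume "k < 0"
      hence "-k \<ge> int g" using gk by (metis dvd_minus_iff neg_0_less_iff_less zdvd_imp_le)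
      hence "int p1 * (-k) \<ge> int p1 * int g" using p1 by (intro mult_left_mono) auto
      moreover have "int a < int g * int p1" using a by (metis of_nat_less_iff of_nat_mult)
      ultimately show False using xk x_def by (simp add: mult.commute)
    qed
  qed
  thus ?thesis using xk yk x_def y_def by simp
qed
lemma support:
  assumes "in_span_scheme d b (Zgen b) f" "b \<le> i" "i \<le> d"
  shows "f i = 0"
proof -
  define h where "h = (\<lambda>k::nat. if k = i - b then (1::complex) else 0)"
  have dm: "dual_mult b (Zgen b) (d - b) h k = (if k = i then 1 else 0)" for k
  proof -
    let ?S = "{j. j \<le> b \<and> j \<le> k \<and> k - j \<le> d - b}"
    have fin: "finite ?S" by (rule finite_subset[of _ "{..b}"]) auto
    have "dual_mult b (Zgen b) (d - b) h k = (\<Sum>j\<in>?S. if j = b then h (k - b) else 0)"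
      unfolding dual_mult_def Zgen_def by (intro sum.cong) auto
    also have "\<dots> = (if b \<in> ?S then h (k - b) else 0)" using fin by (simp add: sum.delta)
    also have "\<dots> = (if k = i then 1 else 0)" using assms(2,3) unfolding h_def by auto
    finally show ?thesis .
  qed
  have "b \<le> d" using assms by simp
  hence "apolar_pair d (dual_mult b (Zgen b) (d - b) h) f = 0" using assms(1) unfolding in_span_scheme_def by blast
  moreover have "apolar_pair d (dual_mult b (Zgen b) (d - b) h) f = f i * of_nat (fact (d - i) * fact i)"
  proof -
    have "apolar_pair d (dual_mult b (Zgen b) (d - b) h) f = (\<Sum>k\<le>d. if k = i then f i * of_nat (fact (d - i) * fact i) else 0)"
      unfolding apolar_pair_def dm by (intro sum.cong) auto
    also have "\<dots> = f i * of_nat (fact (d - i) * fact i)" using assms(3) by (simp add: sum.delta)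
    finally show ?thesis .
  qed
  ultimately show ?thesis by (simp add: fact_nonzero)
qed

lemma roots_sum:
  fixes M n :: nat
  assumes M: "M > 0"
  defines "\<omega> \<equiv> cis (2 * pi / real M)"
  shows "(\<Sum>l<M. (\<omega> ^ l) ^ n) = (if M dvd n then of_nat M else 0)"
proof -
  have wM: "\<omega> ^ M = 1" unfolding \<omega>_def DeMoivre using M by simp
  have wn: "\<omega> ^ n = \<omega> ^ (n mod M)"
  proof -
    have "\<omega> ^ n = \<omega> ^ (M * (n div M) + n mod M)" by simp
    also have "\<dots> = (\<omega> ^ M) ^ (n div M) * \<omega> ^ (n mod M)" by (simp only: power_add power_mult)
    finally show ?thesis using wM by simp
  qed
  have sw: "(\<omega> ^ l) ^ n = (\<omega> ^ n) ^ l" for l by (simp add: power_mult[symmetric] mult.commute)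
  show ?thesis
  proof (cases "M dvd n")
    case True
    hence "\<omega> ^ n = 1" using wn by simp
    thus ?thesis using True by (simp add: sw)
  next
    case False
    define r where "r = n mod M"
    have r: "0 < r" "r < M" using False M unfolding r_def by (simp_all add: dvd_eq_mod_eq_0)
    have inj: "inj_on (\<lambda>k. cis (2 * pi * real k / real M)) {..<M}"
      using bij_betw_roots_unity[OF M] by (simp add: bij_betw_def)
    have "\<omega> ^ r = cis (2 * pi * real r / real M)" unfolding \<omega>_def DeMoivre by (simp add: field_simps)
    moreover have "cis (2 * pi * real r / real M) \<noteq> cis (2 * pi * real 0 / real M)"
      using inj_onD[OF inj, of r 0] r M by auto
    ultimately have z1: "\<omega> ^ n \<noteq> 1" using wn r_def by simp
    have zM: "(\<omega> ^ n) ^ M = 1"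
    proof -
      have "(\<omega> ^ n) ^ M = (\<omega> ^ M) ^ n" by (simp only: power_mult[symmetric] mult.commute)
      thus ?thesis using wM by simp
    qed
    have "(\<Sum>l<M. (\<omega> ^ n) ^ l) = ((\<omega> ^ n) ^ M - 1) / (\<omega> ^ n - 1)"
      using z1 by (rule geometric_sum)
    also have "\<dots> = 0" using zM by simp
    finally show ?thesis using False by (simp add: sw)
  qed
qed

lemma ex_root:
  fixes c :: complex and n :: nat
  assumes "n > 0"
  shows "\<exists>z. z ^ n = c"
proof (cases "c = 0")
  case True thus ?thesis using assms by (intro exI[of _ 0]) simp
next
  case False
  from bij_betw_nth_root_unity[OF False assms] have "(\<lambda>z. (root n (norm c) * cis (Arg c / n)) * z) ` {z. z ^ n = 1} = {z. z ^ n = c}"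
    by (simp add: bij_betw_def)
  moreover have "(1::complex) \<in> {z. z ^ n = 1}" by simp
  ultimately have "(root n (norm c) * cis (Arg c / n)) * 1 \<in> {z. z ^ n = c}" by blast
  thus ?thesis by blast
qed

theorem proposition3p9:
  fixes d1 d2 b1 b2 :: nat and T1 T2 :: "nat \<Rightarrow> complex"
  assumes "2 \<le> b1" "2 * b1 \<le> d1" "2 \<le> b2" "2 * b2 \<le> d2"
    and "cactus_rank d1 T1 = b1" "in_span_scheme d1 b1 (Zgen b1) T1"
    and "cactus_rank d2 T2 = b2" "in_span_scheme d2 b2 (Zgen b2) T2"
  shows "ps_rank d1 d2 (tensor_prod T1 T2) \<le> d1 * b2 + d2 * b1 + b1 * b2 - 1"
proof -
  have T1z: "T1 i = 0" if "b1 \<le> i" "i \<le> d1" for i using support[OF assms(6) that] .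
  have T2z: "T2 j = 0" if "b2 \<le> j" "j \<le> d2" for j using support[OF assms(8) that] .
  define g where "g = gcd b1 b2"
  define p1 where "p1 = b1 div g"
  define p2 where "p2 = b2 div g"
  have gpos: "g > 0" using assms(1) g_def by simp
  have b1eq: "b1 = g * p1" unfolding p1_def g_def by simp
  have b2eq: "b2 = g * p2" unfolding p2_def g_def by simp
  have p1pos: "p1 > 0" using b1eq assms(1) by (cases p1) auto
  have p2pos: "p2 > 0" using b2eq assms(3) by (cases p2) auto
  have "coprime p1 p2" unfolding p1_def p2_def g_def
    by (rule div_gcd_coprime) (use assms(1) in simp)
  hence cop: "gcd p2 p1 = 1" by (simp add: coprime_iff_gcd_eq_1 gcd.commute)
  obtain t s where bez: "p2 * t = p1 * s + 1" using bezout_nat[of p2 p1] cop p2pos by auto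
  define N where "N = p2*d1 + p1*d2 + 1"
  define \<alpha> where "\<alpha> = p2 + N*s"
  define \<beta> where "\<beta> = p1 + N*t"
  define M where "M = N * g"
  define \<Phi> where "\<Phi> = (\<lambda>i j. \<alpha>*i + \<beta>*j)"
  define \<omega> where "\<omega> = cis (2*pi/real M)"
  define B where "B = (\<lambda>a b. T1 a * T2 b / (of_nat (d1 choose a) * of_nat (d2 choose b)))"
  define lam where "lam = (\<lambda>l::nat. (1/of_nat M) * (\<Sum>a<b1. \<Sum>b<b2. B a b * (\<omega>^l)^((M-1)*\<Phi> a b)))"
  have Mpos: "M > 0" unfolding M_def N_def using gpos by simp
  have d1pos: "d1 > 0" using assms by linarith
  have "\<forall>l. \<exists>z. z^d1 = lam l" using ex_root[OF d1pos] by blast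
  then obtain c where c: "\<And>l. c l ^ d1 = lam l" by metis
  define v1 where "v1 = (\<lambda>l. (c l, c l * (\<omega>^l)^\<alpha>))"
  define v2 where "v2 = (\<lambda>l. (1::complex, (\<omega>^l)^\<beta>))"
  have key: "\<forall>i\<le>d1. \<forall>j\<le>d2. tensor_prod T1 T2 i j = (\<Sum>l<M. pow_coeff d1 (v1 l) i * pow_coeff d2 (v2 l) j)"
  proof (intro allI impI)
    fix i j assume i: "i \<le> d1" and j: "j \<le> d2"
    have trm: "pow_coeff d1 (v1 l) i * pow_coeff d2 (v2 l) j = of_nat (d1 choose i) * of_nat (d2 choose j) * (lam l * (\<omega>^l)^(\<Phi> i j))" for l
    proof -
      have "pow_coeff d1 (v1 l) i = of_nat (d1 choose i) * (c l ^ (d1 - i) * c l ^ i) * (\<omega>^l)^(\<alpha>*i)"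
        unfolding pow_coeff_def v1_def by (simp add: power_mult_distrib power_mult mult_ac)
      also have "c l ^ (d1 - i) * c l ^ i = lam l" using c[of l] i by (simp add: power_add[symmetric])
      finally have e1: "pow_coeff d1 (v1 l) i = of_nat (d1 choose i) * lam l * (\<omega>^l)^(\<alpha>*i)" .
      have e2: "pow_coeff d2 (v2 l) j = of_nat (d2 choose j) * (\<omega>^l)^(\<beta>*j)"
        unfolding pow_coeff_def v2_def by (simp add: power_mult)
      show ?thesis unfolding e1 e2 \<Phi>_def by (simp add: power_add mult_ac)
    qed
    have dvd_iff: "M dvd ((M-1)*\<Phi> a b + \<Phi> i j) \<longleftrightarrow> (a = i \<and> b = j)" if ab: "a < b1" "b < b2" for a b
    proof
      assume "M dvd ((M-1)*\<Phi> a b + \<Phi> i j)"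
      hence "int M dvd int ((M-1)*\<Phi> a b + \<Phi> i j)" by (simp only: int_dvd_int_iff)
      moreover have "int ((M-1)*\<Phi> a b + \<Phi> i j) = int M * int (\<Phi> a b) + (int (\<Phi> i j) - int (\<Phi> a b))"
        using Mpos by (cases M) (simp_all add: algebra_simps)
      ultimately have "int M dvd (int (\<Phi> i j) - int (\<Phi> a b))"
        by (metis dvd_add_right_iff dvd_triv_left)
      hence dv: "int (N*g) dvd (int ((p2+N*s)*i + (p1+N*t)*j) - int ((p2+N*s)*a + (p1+N*t)*b))"
        unfolding M_def \<Phi>_def \<alpha>_def \<beta>_def .
      have "i = a \<and> j = b"
        by (rule sep[OF bez p1pos p2pos N_def _ _ i j _ _ dv])
           (use ab b1eq b2eq assms in \<open>simp_all add: mult.commute\<close>)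
      thus "a = i \<and> b = j" by simp
    next
      assume "a = i \<and> b = j"
      hence "(M-1)*\<Phi> a b + \<Phi> i j = M * \<Phi> i j" using Mpos by (simp add: algebra_simps)
      thus "M dvd ((M-1)*\<Phi> a b + \<Phi> i j)" by simp
    qed
    have inner: "(\<Sum>l<M. lam l * (\<omega>^l)^(\<Phi> i j)) = (\<Sum>a<b1. \<Sum>b<b2. B a b * (if a = i \<and> b = j then 1 else 0))"
    proof -
      have "(\<Sum>l<M. lam l * (\<omega>^l)^(\<Phi> i j))
          = (1/of_nat M) * (\<Sum>a<b1. \<Sum>b<b2. B a b * (\<Sum>l<M. (\<omega>^l)^((M-1)*\<Phi> a b + \<Phi> i j)))"
        unfolding lam_def
        by (simp add: sum_distrib_left sum_distrib_right power_add mult_ac sum.swap[of _ "{..<M}"])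
      also have "\<dots> = (1/of_nat M) * (\<Sum>a<b1. \<Sum>b<b2. B a b * (if M dvd ((M-1)*\<Phi> a b + \<Phi> i j) then of_nat M else 0))"
        unfolding \<omega>_def using roots_sum[OF Mpos] by simp
      also have "\<dots> = (\<Sum>a<b1. \<Sum>b<b2. B a b * (if a = i \<and> b = j then 1 else 0))"
        unfolding sum_distrib_left
      proof (intro sum.cong refl)
        fix a b assume ab: "a \<in> {..<b1}" "b \<in> {..<b2}"
        show "1/of_nat M * (B a b * (if M dvd ((M-1)*\<Phi> a b + \<Phi> i j) then of_nat M else 0)) = B a b * (if a = i \<and> b = j then 1 else 0)"
          using dvd_iff[of a b] ab Mpos by auto
      qed
      finally show ?thesis .
    qed
    have s2: "(\<Sum>a<b1. \<Sum>b<b2. B a b * (if a = i \<and> b = j then 1 else 0)) = (if i < b1 \<and> j < b2 then B i j else 0)"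
    proof -
      have "(\<Sum>a<b1. \<Sum>b<b2. B a b * (if a = i \<and> b = j then 1 else 0)) = (\<Sum>a<b1. if a = i then (if j < b2 then B i j else 0) else 0)"
        by (intro sum.cong refl) (auto simp: if_distrib cong: if_cong)
      also have "\<dots> = (if i < b1 \<and> j < b2 then B i j else 0)" by (simp add: sum.delta)
      finally show ?thesis .
    qed
    have "(\<Sum>l<M. pow_coeff d1 (v1 l) i * pow_coeff d2 (v2 l) j)
        = of_nat (d1 choose i) * of_nat (d2 choose j) * (\<Sum>l<M. lam l * (\<omega>^l)^(\<Phi> i j))"
      unfolding trm by (simp add: sum_distrib_left)
    also have "\<dots> = of_nat (d1 choose i) * of_nat (d2 choose j) * (if i < b1 \<and> j < b2 then B i j else 0)"
      unfolding inner s2 ..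
    also have "\<dots> = T1 i * T2 j"
    proof (cases "i < b1 \<and> j < b2")
      case True
      have "(d1 choose i) \<noteq> 0" "(d2 choose j) \<noteq> 0" using i j by simp_all
      thus ?thesis using True unfolding B_def by (simp add: field_simps)
    next
      case False
      hence "T1 i * T2 j = 0" using T1z[of i] T2z[of j] i j by auto
      thus ?thesis using False by (simp only: if_False) simp
    qed
    finally show "tensor_prod T1 T2 i j = (\<Sum>l<M. pow_coeff d1 (v1 l) i * pow_coeff d2 (v2 l) j)"
      unfolding tensor_prod_def by simp
  qed
  have "ps_rank d1 d2 (tensor_prod T1 T2) \<le> M"
    unfolding ps_rank_def by (rule Least_le) (use key in blast)
  moreover have "M \<le> d1 * b2 + d2 * b1 + b1 * b2 - 1"
  proof -
    have "M = d1 * b2 + d2 * b1 + g" unfolding M_def N_def b1eq b2eq by (simp add: algebra_simps)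
    moreover have "g \<le> b1" unfolding g_def using assms(1) by simp
    moreover have "b1 * b2 \<ge> b1 * 2" using assms(3) by (intro mult_left_mono) auto
    ultimately show ?thesis using assms(1) by linarith
  qed
  ultimately show ?thesis by linarith
qed

end
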